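(* Let $\alpha\in\mathbb{R}$, let $p$ be a positive integer, $b\in\mathbb{R}$, and let $f$ be defined only on ${}_{b}\mathbb{N}$. Then for all $t\in{}_{b-2p+1}\mathbb{N}$, $${}_{b-p+1}\nabla^{-\alpha}\,{}_{\ominus}\Delta^p f(t)={}_{\ominus}\Delta^p\,{}_{b-p+1}\nabla^{-\alpha}f(t)-\sum_{k=0}^{p-1}\frac{(b-p+1-t)^{\overline{\alpha-p+k}}}{\Gamma(\alpha+k-p+1)}\,{}_{\ominus}\Delta^k f(b-p+1).$$
   Context: Notation: ${}_{c}\mathbb{N}=\{c,c-1,\dots\}$, $\rho(t)=t-1$, $\Delta g(t)=g(t+1)-g(t)$, ${}_{\ominus}\Delta^m g=(-1)^m\Delta^m g$. Rising factorial: $t^{\overline{\beta}}=\Gamma(t+\beta)/\Gamma(t)$ with $0^{\overline{\beta}}=0$; the reciprocal of $\Gamma$ at a pole is $0$. For $\gamma>0$ and endpoint $c$, the nabla right fractional sum is ${}_{c}\nabla^{-\gamma}g(t)=\frac{1}{\Gamma(\gamma)}\sum_{s=t}^{c-1}(s-\rho(t))^{\overline{\gamma-1}}g(s)$, a sum with upper limit smaller than lower limit being $0$. For $\beta>0$ let $n=[\beta]+1$ with $[\beta]$ the greatest integer strictly less than $\beta$; the nabla right fractional difference is ${}_{c}\nabla^{\beta}g(t)=(-1)^n\Delta^n\,{}_{c}\nabla^{-(n-\beta)}g(t)$ (order-$0$ operator = identity). For $\alpha<0$, ${}_{c}\nabla^{-\alpha}$ denotes the nabla right fractional difference of order $-\alpha$;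 for $\alpha=0$ the identity. *)

theory Defs
  imports "HOL-Analysis.Analysis"
begin

definition latt :: "real \<Rightarrow> real set" where
  "latt c = {c - real j | j. True}"

definition rising :: "real \<Rightarrow> real \<Rightarrow> real" where
  "rising t \<beta> = (if t = 0 then 0 else Gamma (t + \<beta>) / Gamma t)"

definition fdiff :: "(real \<Rightarrow> real) \<Rightarrow> real \<Rightarrow> real" where
  "fdiff g t = g (t + 1) - g t"

definition odiff :: "nat \<Rightarrow> (real \<Rightarrow> real) \<Rightarrow> real \<Rightarrow> real" where
  "odiff m g t = (-1) ^ m * (fdiff ^^ m) g t"

text \<open>Nabla right fractional sum of order gamma > 0 with endpoint c:
  (1/Gamma gamma) * sum_{s=t}^{c-1} (s - rho t)^(gamma-1) g(s),
  with s = t + j, j = 0 .. c-1-t (empty if c-1 < t); here s - rho(t) = j + 1.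
  The reciprocal of Gamma is rGamma (0 at poles).\<close>
definition nsum :: "real \<Rightarrow> real \<Rightarrow> (real \<Rightarrow> real) \<Rightarrow> real \<Rightarrow> real" where
  "nsum c \<gamma> g t = rGamma \<gamma> * (\<Sum>j<nat \<lfloor>c - t\<rfloor>. rising (real j + 1) (\<gamma> - 1) * g (t + real j))"

text \<open>Nabla right fractional difference of order beta > 0 with endpoint c:
  n = [beta] + 1 = ceiling beta, result (-1)^n Delta^n (c nabla^(-(n-beta)) g),
  the order-0 operator being the identity.\<close>
definition ndiff :: "real \<Rightarrow> real \<Rightarrow> (real \<Rightarrow> real) \<Rightarrow> real \<Rightarrow> real" where
  "ndiff c \<beta> g = (let n = nat \<lceil>\<beta>\<rceil> in
      odiff n (if real n - \<beta> = 0 then g else nsum c (real n - \<beta>) g))"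

definition nabla_op :: "real \<Rightarrow> real \<Rightarrow> (real \<Rightarrow> real) \<Rightarrow> real \<Rightarrow> real" where
  "nabla_op c \<alpha> g = (if \<alpha> > 0 then nsum c \<alpha> g else if \<alpha> = 0 then g else ndiff c (- \<alpha>) g)"

end

theory Submission
  imports Defs
begin

definition KK :: "real \<Rightarrow> nat \<Rightarrow> real" where
  "KK a s = pochhammer a s / fact s"

lemma KK_0 [simp]: "KK a 0 = 1" by (simp add: KK_def)

lemma KK_pascal: "KK a (Suc j) - KK a j = KK (a - 1) (Suc j)"
proof -
  define P where "P = pochhammer a j"
  define F where "F = (fact j :: real)"
  have F: "F > 0" by (simp add: F_def)
  have 1: "pochhammer (a - 1) (Suc j) = (a - 1) * P"
    by (simp add: pochhammer_rec P_def)
  have 2: "pochhammer a (Suc j) = P * (a + j)"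
    by (simp add: pochhammer_Suc P_def)
  have 3: "fact (Suc j) = (real j + 1) * F" by (simp add: F_def)
  have "P * (a + j) / ((real j + 1) * F) - P / F = (a - 1) * P / ((real j + 1) * F)"
  proof -
    have nz: "(real j + 1) * F \<noteq> 0" using F by simp
    have "P / F = P * (real j + 1) / ((real j + 1) * F)" using F by simp
    then show ?thesis using nz by (simp add: diff_divide_distrib[symmetric] algebra_simps)
  qed
  then show ?thesis
    unfolding KK_def 1 2 3 by (simp add: P_def F_def)
qed

lemma odiff_Suc: "odiff (Suc m) g x = odiff m g x - odiff m g (x + 1)"
  by (simp add: odiff_def fdiff_def algebra_simps)

lemma odiff_add: "odiff (m + n) g = odiff m (odiff n g)"
proof -
  have "(fdiff ^^ m) (\<lambda>x. c * h x) = (\<lambda>x. c * (fdiff ^^ m) h x)" for c h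
    by (induction m) (auto simp: fdiff_def algebra_simps)
  then show ?thesis
    unfolding odiff_def by (simp add: funpow_add power_add mult.assoc)
qed

lemma odiff_0 [simp]: "odiff 0 g = g" by (simp add: odiff_def fun_eq_iff)

lemma odiff_1: "odiff (Suc 0) g x = g x - g (x + 1)"
  by (simp add: odiff_def fdiff_def)

lemma sbp1:
  "(\<Sum>s<Suc n. KK a s * (f (t + real s) - f (t + real s + 1))) =
   (\<Sum>s<Suc n. KK (a - 1) s * f (t + real s)) - KK a n * f (t + real (Suc n))"
proof (induction n)
  case 0
  then show ?case by simp
next
  case (Suc n)
  have p: "KK a (Suc n) = KK (a - 1) (Suc n) + KK a n" using KK_pascal[of a n] by simp
  show ?case
    using Suc by (simp add: p algebra_simps)
qed

lemma sbp:
  "(\<Sum>s<Suc n. KK a s * odiff p f (t + real s)) =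
   (\<Sum>s<Suc n. KK (a - real p) s * f (t + real s))
   - (\<Sum>k<p. KK (a - real p + real k + 1) n * odiff k f (t + real (Suc n)))"
proof (induction p arbitrary: f)
  case 0
  then show ?case by simp
next
  case (Suc p)
  have e: "odiff (Suc p) f = odiff p (odiff 1 f)"
    using odiff_add[of p 1 f] by simp
  have e2: "odiff k (odiff (Suc 0) f) = odiff (Suc k) f" for k
    using odiff_add[of k 1 f] by simp
  have "(\<Sum>s<Suc n. KK a s * odiff (Suc p) f (t + real s)) =
     (\<Sum>s<Suc n. KK (a - real p) s * odiff 1 f (t + real s))
     - (\<Sum>k<p. KK (a - real p + real k + 1) n * odiff (Suc k) f (t + real (Suc n)))"
    unfolding e using Suc[of "odiff 1 f"] by (simp add: e2)
  also have "(\<Sum>s<Suc n. KK (a - real p) s * odiff 1 f (t + real s)) =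
     (\<Sum>s<Suc n. KK (a - real p - 1) s * f (t + real s)) - KK (a - real p) n * f (t + real (Suc n))"
    using sbp1[where a="a - real p" and n=n and f=f and t=t] by (simp add: odiff_1 add.assoc add.commute)
  also have "(\<Sum>k<Suc p. KK (a - real (Suc p) + real k + 1) n * odiff k f (t + real (Suc n)))
     = KK (a - real p) n * f (t + real (Suc n)) +
       (\<Sum>k<p. KK (a - real p + real k + 1) n * odiff (Suc k) f (t + real (Suc n)))"
    by (subst sum.lessThan_Suc_shift) (simp add: algebra_simps)
  ultimately show ?case by (simp add: algebra_simps)
qed

definition SS :: "real \<Rightarrow> real \<Rightarrow> (real \<Rightarrow> real) \<Rightarrow> real \<Rightarrow> real" where
  "SS c a g x = (\<Sum>j<nat \<lfloor>c - x\<rfloor>. KK a j * g (x + real j))"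

lemma SS_step: "SS c a g x - SS c a g (x + 1) = SS c (a - 1) g x"
proof (cases "nat \<lfloor>c - x\<rfloor>")
  case 0
  have "\<lfloor>c - (x + 1)\<rfloor> = \<lfloor>c - x\<rfloor> - 1"
    using floor_diff_one[of "c - x"] by (simp add: algebra_simps)
  then have "nat \<lfloor>c - (x + 1)\<rfloor> = 0" using 0 by simp
  then show ?thesis using 0 by (simp add: SS_def)
next
  case (Suc M)
  have "\<lfloor>c - (x + 1)\<rfloor> = \<lfloor>c - x\<rfloor> - 1"
    using floor_diff_one[of "c - x"] by (simp add: algebra_simps)
  then have M: "nat \<lfloor>c - (x + 1)\<rfloor> = M" using Suc by simp
  have "SS c a g x = g x + (\<Sum>j<M. KK a (Suc j) * g (x + 1 + real j))"
    unfolding SS_def Suc by (subst sum.lessThan_Suc_shift) (simp add: algebra_simps)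
  moreover have "SS c (a - 1) g x = g x + (\<Sum>j<M. KK (a - 1) (Suc j) * g (x + 1 + real j))"
    unfolding SS_def Suc by (subst sum.lessThan_Suc_shift) (simp add: algebra_simps)
  moreover have "SS c a g (x + 1) = (\<Sum>j<M. KK a j * g (x + 1 + real j))"
    unfolding SS_def M by simp
  ultimately show ?thesis
    by (simp add: KK_pascal[symmetric] left_diff_distrib sum_subtractf)
qed

lemma odiff_SS: "odiff i (SS c a g) x = SS c (a - real i) g x"
proof (induction i arbitrary: x)
  case 0
  then show ?case by simp
next
  case (Suc i)
  show ?case
    using SS_step[of c "a - real i" g x] by (simp add: odiff_Suc Suc algebra_simps)
qed

lemma coef_eq:
  assumes "\<gamma> \<notin> \<int>\<^sub>\<le>\<^sub>0"
  shows "rGamma \<gamma> * rising (real j + 1) (\<gamma> - 1) = KK \<gamma> j"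
proof -
  have "rising (real j + 1) (\<gamma> - 1) = Gamma (\<gamma> + real j) / Gamma (1 + real j)"
    by (simp add: rising_def algebra_simps)
  also have "Gamma (1 + real j) = fact j" using Gamma_fact[of j] by simp
  also have "Gamma (\<gamma> + real j) = pochhammer \<gamma> j * Gamma \<gamma>"
    using pochhammer_Gamma[OF assms, of j] assms by (simp add: Gamma_eq_zero_iff)
  finally show ?thesis
    using assms by (simp add: KK_def rGamma_inverse_Gamma Gamma_eq_zero_iff field_simps)
qed

lemma nsum_SS: "\<gamma> \<notin> \<int>\<^sub>\<le>\<^sub>0 \<Longrightarrow> nsum c \<gamma> g = SS c \<gamma> g"
  unfolding nsum_def SS_def fun_eq_iff
  by (simp add: sum_distrib_left mult.assoc[symmetric] coef_eq)

lemma nabla_SS: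
  assumes "\<alpha> \<notin> \<int>\<^sub>\<le>\<^sub>0"
  shows "nabla_op c \<alpha> g = SS c \<alpha> g"
proof (cases "\<alpha> > 0")
  case True
  then show ?thesis using assms by (simp add: nabla_op_def nsum_SS)
next
  case False
  have "\<alpha> \<noteq> 0" using assms by auto
  with False have neg: "\<alpha> < 0" by simp
  define n where "n = nat \<lceil>- \<alpha>\<rceil>"
  have rn: "real n = real_of_int \<lceil>- \<alpha>\<rceil>" unfolding n_def using neg by simp
  have ge: "real n \<ge> - \<alpha>" unfolding rn by (rule le_of_int_ceiling)
  have ne: "real n - (- \<alpha>) \<noteq> 0"
  proof
    assume "real n - (- \<alpha>) = 0"
    then have "\<alpha> = - real n" by simp
    then show False using assms by simp
  qed
  then have pos: "real n + \<alpha> > 0" using ge by simp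
  then have nn: "real n + \<alpha> \<notin> \<int>\<^sub>\<le>\<^sub>0"
    by (meson nonpos_Ints_nonpos not_le)
  have "nabla_op c \<alpha> g = odiff n (nsum c (real n + \<alpha>) g)"
    using False neg ne by (simp add: nabla_op_def ndiff_def n_def Let_def)
  also have "\<dots> = odiff n (SS c (real n + \<alpha>) g)" using nsum_SS[OF nn] by simp
  also have "\<dots> = SS c \<alpha> g" by (simp add: fun_eq_iff odiff_SS)
  finally show ?thesis .
qed

lemma nabla_int:
  shows "nabla_op c (- real n) g = odiff n g"
proof (cases "n = 0")
  case True
  then show ?thesis by (simp add: nabla_op_def)
next
  case False
  then show ?thesis by (simp add: nabla_op_def ndiff_def)
qed

lemma rising_eq:
  assumes "a \<notin> \<int>\<^sub>\<le>\<^sub>0 \<or> pochhammer a n = 0"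
  shows "rising (real (Suc n)) (a - 1) * rGamma a = KK a n"
proof (cases "a \<in> \<int>\<^sub>\<le>\<^sub>0")
  case True
  then show ?thesis using assms by (simp add: KK_def rGamma_eq_zero_iff)
next
  case False
  have "rising (real (Suc n)) (a - 1) = Gamma (a + real n) / Gamma (1 + real n)"
    by (simp add: rising_def algebra_simps)
  also have "Gamma (1 + real n) = fact n" using Gamma_fact[of n] by simp
  also have "Gamma (a + real n) = pochhammer a n * Gamma a"
    using pochhammer_Gamma[OF False, of n] False by (simp add: Gamma_eq_zero_iff)
  finally show ?thesis
    using False by (simp add: KK_def rGamma_inverse_Gamma Gamma_eq_zero_iff field_simps)
qed

theorem theorem2p12:
  fixes \<alpha> b t :: real and p :: nat and f :: "real \<Rightarrow> real"
  assumes "p > 0"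
    and "t \<in> latt (b - 2 * real p + 1)"
  shows "nabla_op (b - real p + 1) \<alpha> (odiff p f) t =
           odiff p (nabla_op (b - real p + 1) \<alpha> f) t
           - (\<Sum>k<p. rising (b - real p + 1 - t) (\<alpha> - real p + real k)
                        * rGamma (\<alpha> + real k - real p + 1)
                        * odiff k f (b - real p + 1))"
proof -
  define c where "c = b - real p + 1"
  obtain m where tm: "t = b - 2 * real p + 1 - real m"
    using assms(2) unfolding latt_def by auto
  define n where "n = p + m - 1"
  have ct: "c - t = real (Suc n)" using assms(1) unfolding c_def n_def tm by simp
  have tc: "t + real (Suc n) = c" using ct by simp
  have fl: "nat \<lfloor>c - t\<rfloor> = Suc n" using ct by simp
  show ?thesis
  proof (cases "\<alpha> \<in> \<int>\<^sub>\<le>\<^sub>0")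
    case True
    then obtain n0 where a: "\<alpha> = - real n0" by (auto elim!: nonpos_Ints_cases')
    have z: "rGamma (\<alpha> + real k - real p + 1) = 0" if "k < p" for k
    proof -
      have "\<alpha> + real k - real p + 1 = - real (n0 + p - k - 1)" using that a by simp
      then show ?thesis by simp
    qed
    have "odiff n0 (odiff p f) = odiff p (odiff n0 f)"
      by (simp add: odiff_add[symmetric] add.commute)
    moreover have "nabla_op c \<alpha> h = odiff n0 h" for h unfolding a by (rule nabla_int)
    moreover have "(\<Sum>k<p. rising (b - real p + 1 - t) (\<alpha> - real p + real k)
                        * rGamma (\<alpha> + real k - real p + 1)
                        * odiff k f (b - real p + 1)) = 0"
      using z by (intro sum.neutral) auto
    ultimately show ?thesis unfolding c_def by simp
  next
    case False
    have "nabla_op c \<alpha> (odiff p f) t = (\<Sum>s<Suc n. KK \<alpha> s * odiff p f (t + real s))"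
      using nabla_SS[OF False] fl by (simp add: SS_def)
    also have "\<dots> = (\<Sum>s<Suc n. KK (\<alpha> - real p) s * f (t + real s))
       - (\<Sum>k<p. KK (\<alpha> - real p + real k + 1) n * odiff k f (t + real (Suc n)))"
      by (rule sbp)
    also have "(\<Sum>s<Suc n. KK (\<alpha> - real p) s * f (t + real s)) = odiff p (nabla_op c \<alpha> f) t"
      using nabla_SS[OF False] fl by (simp add: odiff_SS SS_def)
    also have "(\<Sum>k<p. KK (\<alpha> - real p + real k + 1) n * odiff k f (t + real (Suc n))) =
      (\<Sum>k<p. rising (c - t) (\<alpha> - real p + real k) * rGamma (\<alpha> + real k - real p + 1)
                        * odiff k f c)"
    proof (rule sum.cong[OF refl])
      fix k assume k: "k \<in> {..<p}"
      define a where "a = \<alpha> - real p + real k + 1"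
      have cond: "a \<notin> \<int>\<^sub>\<le>\<^sub>0 \<or> pochhammer a n = 0"
      proof (cases "a \<in> \<int>\<^sub>\<le>\<^sub>0")
        case True
        then obtain r where r: "a = - real r" by (auto elim!: nonpos_Ints_cases')
        have "r < n"
        proof (rule ccontr)
          assume "\<not> r < n"
          have "r + k + 1 \<ge> p" using \<open>\<not> r < n\<close> unfolding n_def by simp
          then have e: "real (r + k + 1 - p) = real r + real k + 1 - real p"
            by (simp add: of_nat_diff)
          have "\<alpha> = - real (r + k + 1 - p)" using r unfolding e a_def by linarith
          then show False using False by simp
        qed
        then show ?thesis using r by (auto simp: pochhammer_eq_0_iff)
      qed simp
      have "rising (c - t) (\<alpha> - real p + real k) * rGamma (\<alpha> + real k - real p + 1) = KK a n"
        using rising_eq[OF cond] unfolding ct a_def by (simp add: algebra_simps)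
      then show "KK (\<alpha> - real p + real k + 1) n * odiff k f (t + real (Suc n)) =
        rising (c - t) (\<alpha> - real p + real k) * rGamma (\<alpha> + real k - real p + 1) * odiff k f c"
        unfolding tc a_def by simp
    qed
    finally show ?thesis unfolding c_def .
  qed
qed

end
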